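(* Let $(T,z)\in\mathbb{R}\times\Sigma_E$ with $\Phi_T(z)=z$ and $\nabla H(z)\neq 0$, and let $M=M_z(T)$. Let $\mathcal{E}_1:=\ker(M-I)\cap T_z\Sigma_E$ and $\mathcal{E}_2:=\{x\in\mathcal{E}_1:\ w_0(x,y)=0\ \forall y\in\mathcal{E}_1\}$. Then $$E_1=\ker(M-I)^2\iff \dim E_1=\dim\mathcal{E}_1+\dim\mathcal{E}_2.$$
   Context: $H:\mathbb{R}^{2n}\to\mathbb{R}$ smooth, $\Sigma_E=\{H=E\}$, $J=\begin{pmatrix}0&I_n\\-I_n&0\end{pmatrix}$, $\Phi_t$ the flow of $\dot z=J\nabla H(z)$, $M_z(t)=\partial_z\Phi_t(z)$ (a symplectic matrix). $E_1:=\sum_{k\ge1}\ker(M-I)^k$ is the algebraic eigenspace of $M$ for eigenvalue $1$. $w_0(x,y):=\langle Jx,y\rangle_{\mathbb{R}^{2n}}$. *)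

theory Defs
  imports "HOL-Analysis.Analysis"
begin

text \<open>Phase space R^{2n} is rendered as (real^'n) \<times> (real^'n), z = (q,p).\<close>

fun iter_deriv :: "'a::real_normed_vector list \<Rightarrow> ('a \<Rightarrow> real) \<Rightarrow> 'a \<Rightarrow> real" where
  "iter_deriv [] f = f"
| "iter_deriv (v # vs) f = (\<lambda>x. frechet_derivative (iter_deriv vs f) (at x) v)"

definition smooth_fun :: "('a::real_normed_vector \<Rightarrow> real) \<Rightarrow> bool" where
  "smooth_fun f \<longleftrightarrow> (\<forall>vs. continuous_on UNIV (iter_deriv vs f) \<and>
                              (\<forall>x. iter_deriv vs f differentiable (at x)))"

definition grad :: "('a::euclidean_space \<Rightarrow> real) \<Rightarrow> 'a \<Rightarrow> 'a" where
  "grad H z = (\<Sum>b\<in>Basis. frechet_derivative H (at z) b *\<^sub>R b)"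

text \<open>Standard symplectic matrix J = [[0, I],[-I, 0]]: J (q,p) = (p, -q).\<close>
definition Jmat :: "(real^'n) \<times> (real^'n) \<Rightarrow> (real^'n) \<times> (real^'n)" where
  "Jmat z = (snd z, - fst z)"

definition w0 :: "(real^'n) \<times> (real^'n) \<Rightarrow> (real^'n) \<times> (real^'n) \<Rightarrow> real" where
  "w0 x y = inner (Jmat x) y"

definition hamiltonian_flow ::
  "((real^'n) \<times> (real^'n) \<Rightarrow> real) \<Rightarrow> (real \<Rightarrow> (real^'n) \<times> (real^'n) \<Rightarrow> (real^'n) \<times> (real^'n)) \<Rightarrow> bool" where
  "hamiltonian_flow H Phi \<longleftrightarrow>
     (\<forall>z. Phi 0 z = z \<and>
          (\<forall>t. ((\<lambda>s. Phi s z) has_vector_derivative Jmat (grad H (Phi t z))) (at t)))"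

end

theory Submission
  imports Defs
begin

lemma rank_nullity:
  fixes f :: "'a::euclidean_space \<Rightarrow> 'b::euclidean_space"
  assumes lf: "linear f" and V: "subspace V"
  shows "dim V = dim (f ` V) + dim {x\<in>V. f x = 0}"
proof -
  define A where "A = {x\<in>V. f x = 0}"
  define W where "W = {y\<in>V. \<forall>x\<in>A. orthogonal x y}"
  have sA: "subspace A" unfolding A_def
    using V lf by (auto simp: subspace_def linear_add linear_scale linear_0)
  have AV: "A \<subseteq> V" unfolding A_def by auto
  have d1: "dim W + dim A = dim V" unfolding W_def
    by (rule dim_subspace_orthogonal_to_vectors[OF sA V AV])
  have sW: "subspace W" unfolding W_def using V
    by (auto simp: subspace_def orthogonal_clauses)
  have img: "f ` W = f ` V"
  proof
    show "f ` W \<subseteq> f ` V" unfolding W_def by auto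
    show "f ` V \<subseteq> f ` W"
    proof
      fix u assume "u \<in> f ` V"
      then obtain v where v: "v \<in> V" "u = f v" by auto
      obtain p q where pq: "p \<in> span A" "\<And>w. w \<in> span A \<Longrightarrow> orthogonal q w" "v = p + q"
        using orthogonal_subspace_decomp_exists[of A v] by metis
      have pA: "p \<in> A" using pq(1) sA by (metis span_eq_iff)
      have qV: "q \<in> V" using pq(3) pA AV v(1) V
        by (metis add_diff_cancel_left' subsetD subspace_diff)
      have "q \<in> W" unfolding W_def using qV pq(2) span_superset
        by (auto simp: orthogonal_commute)
      moreover have "f v = f q" using pq(3) pA lf unfolding A_def
        by (simp add: linear_add)
      ultimately show "u \<in> f ` W" using v by auto
    qed
  qed
  have inj: "inj_on f (span W)"
  proof -
    have spW: "span W = W" using sW by (metis span_eq_iff)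
    show ?thesis unfolding spW
    proof (rule inj_onI)
      fix x y assume xy: "x \<in> W" "y \<in> W" "f x = f y"
      then have "x - y \<in> W" using sW by (simp add: subspace_diff)
      moreover have "x - y \<in> A" unfolding A_def using xy lf W_def
        by (auto simp: linear_diff subspace_diff[OF V])
      ultimately have "orthogonal (x - y) (x - y)" unfolding W_def by auto
      then show "x = y" by (simp add: orthogonal_self)
    qed
  qed
  have "dim (f ` W) = dim W" using dim_image_eq[OF lf inj] .
  then show ?thesis using d1 img unfolding A_def by simp
qed

lemma w0_antisym: "w0 x y = - w0 y x"
  unfolding w0_def Jmat_def by (cases x, cases y) (simp add: inner_Pair inner_commute)

lemma w0_self[simp]: "w0 x x = 0"
  using w0_antisym[of x x] by simp

lemma linear_Jmat: "linear Jmat"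
  unfolding Jmat_def by (intro linearI) (auto simp: algebra_simps)

lemma Jmat_Jmat[simp]: "Jmat (Jmat x) = - x"
  unfolding Jmat_def by (cases x) simp

lemma Jmat_inner[simp]: "inner (Jmat x) (Jmat y) = inner x y"
  unfolding Jmat_def by (cases x, cases y) (simp add: inner_Pair)

lemma linear_w0_right: "linear (w0 v)"
  unfolding w0_def by (intro linearI) (auto simp: inner_add_right)

lemma Jmat_add: "Jmat (x + y) = Jmat x + Jmat y"
  unfolding Jmat_def by (cases x, cases y) simp
lemma Jmat_scale: "Jmat (c *\<^sub>R x) = c *\<^sub>R Jmat x"
  unfolding Jmat_def by (cases x) simp
lemma Jmat_diff: "Jmat (x - y) = Jmat x - Jmat y"
  unfolding Jmat_def by (cases x, cases y) simp
lemma Jmat_minus: "Jmat (- x) = - Jmat x"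
  unfolding Jmat_def by (cases x) simp
lemma Jmat_zero[simp]: "Jmat 0 = 0"
  unfolding Jmat_def by (simp add: zero_prod_def)
lemma w0_add_left: "w0 (x + y) z = w0 x z + w0 y z"
  unfolding w0_def by (simp add: Jmat_add inner_add_left)
lemma w0_scale_left: "w0 (c *\<^sub>R x) z = c * w0 x z"
  unfolding w0_def by (simp add: Jmat_scale)
lemma w0_diff_left: "w0 (x - y) z = w0 x z - w0 y z"
  unfolding w0_def by (simp add: Jmat_diff inner_diff_left)
lemma w0_add_right: "w0 z (x + y) = w0 z x + w0 z y"
  unfolding w0_def by (simp add: inner_add_right)
lemma w0_scale_right: "w0 z (c *\<^sub>R x) = c * w0 z x"
  unfolding w0_def by simp
lemma w0_diff_right: "w0 z (x - y) = w0 z x - w0 z y"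
  unfolding w0_def by (simp add: inner_diff_right)

lemma Jmat_inj: "Jmat x = Jmat y \<Longrightarrow> x = y"
  by (metis Jmat_Jmat minus_equation_iff)

lemma funpow_linear:
  fixes f :: "'a::real_vector \<Rightarrow> 'a" and k :: nat
  shows "linear f \<Longrightarrow> linear (f ^^ k)"
  proof (induction k)
  case 0 show ?case by (simp add: linear_iff)
next
  case (Suc k) then show ?case using linear_compose[of "f ^^ k" f] by (simp add: o_def)
qed

lemma w0_zero_right[simp]: "w0 x 0 = 0" unfolding w0_def by simp
lemma w0_zero_left[simp]: "w0 0 x = 0" unfolding w0_def by simp

lemma subspace_ker: "linear f \<Longrightarrow> subspace {x. f x = 0}"
  by (auto simp: subspace_def linear_add linear_scale linear_0)

lemma LA_main:
  fixes M :: "(real^'n) \<times> (real^'n) \<Rightarrow> (real^'n) \<times> (real^'n)" and g :: "(real^'n) \<times> (real^'n)"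
  assumes lin: "linear M" and symp: "\<And>x y. w0 (M x) (M y) = w0 x y"
    and fixv: "M (Jmat g) = Jmat g"
  shows "let M = M; N = (\<lambda>x. M x - x);
             E1 = {x. \<exists>k\<ge>1. (N ^^ k) x = 0};
             \<E>1 = {x. M x = x \<and> inner g x = 0};
             \<E>2 = {x \<in> \<E>1. \<forall>y\<in>\<E>1. w0 x y = 0}
         in E1 = {x. (N ^^ 2) x = 0} \<longleftrightarrow> dim E1 = dim \<E>1 + dim \<E>2"
proof -
  define N where "N = (\<lambda>x. M x - x)"
  have linN: "linear N" unfolding N_def using lin by (intro linear_compose_sub linear_id) (auto simp: id_def linear_iff)
  define K where "K = {x. N x = 0}"
  define K2 where "K2 = {x. N (N x) = 0}"
  define R where "R = range N"
  define Kw where "Kw = {y. \<forall>x\<in>K. w0 x y = 0}"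
  define v where "v = Jmat g"
  define F1 where "F1 = {x. M x = x \<and> inner g x = 0}"
  define F2 where "F2 = {x \<in> F1. \<forall>y\<in>F1. w0 x y = 0}"
  define E1 where "E1 = {x. \<exists>k\<ge>1. (N ^^ k) x = 0}"
  have vK: "v \<in> K" unfolding K_def N_def v_def using fixv by simp
  have sK: "subspace K" unfolding K_def using subspace_ker[OF linN] .
  have sK2: "subspace K2" unfolding K2_def using subspace_ker[OF linear_compose[OF linN linN]] by (simp add: o_def)
  have sKw: "subspace Kw" unfolding Kw_def
    by (auto simp: subspace_def w0_add_right w0_scale_right)
  have sR: "subspace R" unfolding R_def using linear_subspace_image[OF linN subspace_UNIV] .
  have d1: "dim K2 = dim (K \<inter> R) + dim K"
  proof -
    have "N ` K2 = K \<inter> R" unfolding K2_def K_def R_def by auto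
    moreover have "{x\<in>K2. N x = 0} = K" unfolding K2_def K_def using linN by (auto simp: linear_0)
    ultimately show ?thesis using rank_nullity[OF linN sK2] by simp
  qed
  have d2: "DIM((real^'n) \<times> (real^'n)) = dim R + dim K"
    using rank_nullity[OF linN subspace_UNIV] unfolding R_def K_def by simp
  have d3: "dim Kw + dim K = DIM((real^'n) \<times> (real^'n))"
  proof -
    have sJK: "subspace (Jmat ` K)" using linear_subspace_image[OF linear_Jmat sK] .
    have "dim {y \<in> UNIV. \<forall>x \<in> Jmat ` K. orthogonal x y} + dim (Jmat ` K) = dim (UNIV :: ((real^'n) \<times> (real^'n)) set)"
      by (rule dim_subspace_orthogonal_to_vectors[OF sJK subspace_UNIV]) simp
    moreover have "{y \<in> UNIV. \<forall>x \<in> Jmat ` K. orthogonal x y} = Kw"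
      unfolding Kw_def orthogonal_def w0_def by auto
    moreover have "dim (Jmat ` K) = dim K"
      by (rule dim_image_eq[OF linear_Jmat]) (meson Jmat_inj inj_onI)
    ultimately show ?thesis by simp
  qed
  have RKw: "R \<subseteq> Kw"
  proof
    fix y assume "y \<in> R"
    then obtain u where u: "y = M u - u" unfolding R_def N_def by auto
    show "y \<in> Kw" unfolding Kw_def mem_Collect_eq
    proof
      fix x assume "x \<in> K"
      then have "M x = x" unfolding K_def N_def by simp
      then show "w0 x y = 0" using symp[of x u] unfolding u by (simp add: w0_diff_right)
    qed
  qed
  have RKw_eq: "R = Kw"
    by (rule subspace_dim_equal[OF sR sKw RKw]) (use d2 d3 in simp)
  have F1_eq: "F1 = {x\<in>K. w0 v x = 0}"
    unfolding F1_def K_def N_def v_def w0_def by auto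
  have dK2: "dim K2 = dim F1 + dim F2"
  proof (cases "\<forall>x\<in>K. w0 v x = 0")
    case True
    then have F1K: "F1 = K" using F1_eq by auto
    have "F2 = K \<inter> Kw" unfolding F2_def F1K Kw_def
      by (auto, metis neg_equal_0_iff_equal w0_antisym, metis neg_equal_0_iff_equal w0_antisym)
    then show ?thesis using d1 F1K RKw_eq by simp
  next
    case False
    then obtain x0 where x0: "x0 \<in> K" "w0 v x0 \<noteq> 0" by auto
    have "dim K = dim (w0 v ` K) + dim {x\<in>K. w0 v x = 0}"
      using rank_nullity[OF linear_w0_right sK] .
    moreover have "w0 v ` K = UNIV"
    proof -
      have "r \<in> w0 v ` K" for r
      proof
        show "r = w0 v ((r / w0 v x0) *\<^sub>R x0)" using x0(2) by (simp add: w0_scale_right)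
        show "(r / w0 v x0) *\<^sub>R x0 \<in> K" using sK x0(1) by (simp add: subspace_scale)
      qed
      then show ?thesis by auto
    qed
    ultimately have dK: "dim K = 1 + dim F1" using F1_eq by simp
    have sF2: "subspace F2" unfolding F2_def F1_eq
      using sK by (auto simp: subspace_def w0_add_right w0_scale_right w0_add_left w0_scale_left)
    have vKw: "v \<notin> Kw" unfolding Kw_def using x0 w0_antisym[of x0 v] by force
    have F2_eq: "F2 = span (insert v (K \<inter> Kw))"
    proof
      show "span (insert v (K \<inter> Kw)) \<subseteq> F2"
      proof (rule span_minimal[OF _ sF2])
        have "v \<in> F2" unfolding F2_def F1_eq using vK by simp
        moreover have "K \<inter> Kw \<subseteq> F2"
        proof
          fix a assume a: "a \<in> K \<inter> Kw"
          have "w0 v a = 0" using a vK unfolding Kw_def by auto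
          moreover have "\<forall>y\<in>F1. w0 a y = 0"
            using a unfolding F1_eq Kw_def by (metis (mono_tags, lifting) IntD2 mem_Collect_eq neg_equal_0_iff_equal w0_antisym)
          ultimately show "a \<in> F2" unfolding F2_def F1_eq using a by auto
        qed
        ultimately show "insert v (K \<inter> Kw) \<subseteq> F2" by auto
      qed
      show "F2 \<subseteq> span (insert v (K \<inter> Kw))"
      proof
        fix x assume x: "x \<in> F2"
        then have xK: "x \<in> K" and xF1: "w0 v x = 0" and xorth: "\<forall>y\<in>F1. w0 x y = 0"
          unfolding F2_def F1_eq by auto
        define c where "c = w0 x0 x / w0 x0 v"
        define a where "a = x - c *\<^sub>R v"
        have x0v: "w0 x0 v \<noteq> 0" using x0(2) w0_antisym[of x0 v] by auto
        have aK: "a \<in> K" unfolding a_def using sK xK vK by (simp add: subspace_diff subspace_scale)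
        have aKw: "a \<in> Kw" unfolding Kw_def mem_Collect_eq
        proof
          fix y assume yK: "y \<in> K"
          define d where "d = w0 v y / w0 v x0"
          define y1 where "y1 = y - d *\<^sub>R x0"
          have y1K: "y1 \<in> K" unfolding y1_def using sK yK x0(1) by (simp add: subspace_diff subspace_scale)
          have "w0 v y1 = 0" unfolding y1_def d_def using x0(2) by (simp add: w0_diff_right w0_scale_right)
          then have y1F1: "y1 \<in> F1" using y1K F1_eq by auto
          have e1: "w0 y1 x = 0" using xorth y1F1 w0_antisym[of y1 x] by auto
          have e2: "w0 y1 v = 0" using \<open>w0 v y1 = 0\<close> w0_antisym[of y1 v] by auto
          have e3: "w0 x0 x - c * w0 x0 v = 0" unfolding c_def using x0v by simp
          have "y = y1 + d *\<^sub>R x0" unfolding y1_def by simp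
          then have "w0 y a = w0 y1 x - c * w0 y1 v + d * (w0 x0 x - c * w0 x0 v)"
            unfolding a_def by (simp add: w0_add_left w0_scale_left w0_diff_right w0_scale_right algebra_simps)
          then show "w0 y a = 0" using e1 e2 e3 by simp
        qed
        have "x = a + c *\<^sub>R v" unfolding a_def by simp
        moreover have "a \<in> span (insert v (K \<inter> Kw))" using aK aKw by (simp add: span_base)
        moreover have "v \<in> span (insert v (K \<inter> Kw))" by (simp add: span_base)
        ultimately show "x \<in> span (insert v (K \<inter> Kw))" by (metis span_add span_scale)
      qed
    qed
    have sKKw: "subspace (K \<inter> Kw)" using sK sKw by (simp add: subspace_def)
    have "dim F2 = dim (K \<inter> Kw) + 1"
      unfolding F2_eq dim_span using vKw sKKw by (metis IntD2 dim_insert span_eq_iff)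
    then show ?thesis using dK d1 RKw_eq by simp
  qed
  have linNk: "linear (N ^^ k)" for k using funpow_linear[OF linN] .
  have sE1: "subspace E1"
  proof (unfold subspace_def, intro conjI ballI allI)
    show "0 \<in> E1" unfolding E1_def using linNk[of 1] linear_0 by blast
  next
    fix x y assume "x \<in> E1" "y \<in> E1"
    then obtain k l where k: "k \<ge> 1" "(N ^^ k) x = 0" and l: "l \<ge> 1" "(N ^^ l) y = 0" unfolding E1_def by auto
    have "(N ^^ (l + k)) x = 0" using k(2) linear_0[OF linNk[of l]] by (simp add: funpow_add)
    moreover have "(N ^^ (k + l)) y = 0" using l(2) linear_0[OF linNk[of k]] by (simp add: funpow_add)
    ultimately have "(N ^^ (k + l)) (x + y) = 0" using linear_add[OF linNk[of "k+l"]] by (simp add: add.commute)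
    then show "x + y \<in> E1" unfolding E1_def using k(1) by (auto intro!: exI[of _ "k+l"])
  next
    fix c and x assume "x \<in> E1"
    then obtain k where k: "k \<ge> 1" "(N ^^ k) x = 0" unfolding E1_def by auto
    then have "(N ^^ k) (c *\<^sub>R x) = 0" using linear_scale[OF linNk[of k]] by simp
    then show "c *\<^sub>R x \<in> E1" unfolding E1_def using k(1) by auto
  qed
  have N2: "{x. (N ^^ 2) x = 0} = K2" unfolding K2_def by (simp add: numeral_2_eq_2)
  have K2E1: "K2 \<subseteq> E1" unfolding E1_def K2_def by (auto intro!: exI[of _ 2] simp: numeral_2_eq_2)
  have "E1 = K2 \<longleftrightarrow> dim E1 = dim K2"
  proof
    assume "dim E1 = dim K2"
    then show "E1 = K2" using subspace_dim_equal[OF sK2 sE1 K2E1] by simp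
  qed simp
  then show ?thesis unfolding Let_def N2[unfolded N_def] E1_def[unfolded N_def] F2_def[unfolded F1_def] F1_def
    using dK2 unfolding F2_def F1_def by (simp add: N_def)
qed

lemma gronwall:
  fixes w :: "real \<Rightarrow> 'a::real_inner" and w' :: "real \<Rightarrow> 'a"
  assumes T: "0 \<le> T" and L: "0 < L" and a: "0 \<le> a" and c: "0 < c"
    and w0: "norm (w 0) < c"
    and cont: "continuous_on {0..T} w"
    and der: "\<And>t. 0 < t \<Longrightarrow> t < T \<Longrightarrow> (w has_vector_derivative w' t) (at t)"
    and bnd: "\<And>t. 0 \<le> t \<Longrightarrow> t \<le> T \<Longrightarrow> norm (w t) < r \<Longrightarrow> norm (w' t) \<le> a + L * norm (w t)"
    and r: "(c + a/L) * exp (L*T) - a/L \<le> r"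
    and t: "0 \<le> t" "t \<le> T"
  shows "norm (w t) < (c + a/L) * exp (L*t) - a/L"
proof (rule ccontr)
  define bt where "bt s = (c + a/L) * exp (L * s) - a/L" for s
  assume "\<not> ?thesis"
  then have tS: "bt t \<le> norm (w t)" unfolding bt_def by simp
  define S where "S = {0..T} \<inter> (\<lambda>s. norm (w s) - bt s) -` {0..}"
  have contb: "continuous_on A bt" for A unfolding bt_def by (intro continuous_intros)
  have clS: "closed S" unfolding S_def
    by (rule continuous_closed_preimage) (auto intro!: continuous_intros cont contb)
  have tS': "t \<in> S" unfolding S_def using t tS by auto
  define ts where "ts = Inf S"
  have bdd: "bdd_below S" unfolding S_def by (rule bdd_belowI[of _ 0]) auto
  have tsS: "ts \<in> S" unfolding ts_def using closed_contains_Inf[OF _ bdd clS] tS' by auto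
  have cpos: "0 < c + a/L" using c a L by (intro add_pos_nonneg) auto
  have bmono: "bt s \<le> bt s'" if "s \<le> s'" for s s'
    unfolding bt_def using cpos L that by (simp add: mult_left_mono)
  have b0: "bt 0 = c" unfolding bt_def by simp
  have ts0: "0 < ts"
  proof -
    have "ts \<ge> 0" using tsS unfolding S_def by auto
    moreover have "ts \<noteq> 0" using tsS w0 b0 unfolding S_def by auto
    ultimately show ?thesis by simp
  qed
  have tsT: "ts \<le> T" using tsS unfolding S_def by auto
  have below: "norm (w s) < bt s" if "0 \<le> s" "s < ts" for s
  proof (rule ccontr)
    assume "\<not> norm (w s) < bt s"
    then have "s \<in> S" unfolding S_def using that tsT by auto
    then have "ts \<le> s" unfolding ts_def using bdd by (simp add: cInf_lower)
    then show False using that by simp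
  qed
  define ph where "ph s = inner (w s) (w s) - (bt s)^2" for s
  define ph' where "ph' s = (\<lambda>h. h * (2 * inner (w s) (w' s) - 2 * bt s * (L * bt s + a)))" for s
  have bder: "(bt has_real_derivative (L * bt s + a)) (at s)" for s
  proof -
    have "(bt has_real_derivative (c + a/L) * (exp (L * s) * L)) (at s)"
      unfolding bt_def by (auto intro!: derivative_eq_intros)
    moreover have "(c + a/L) * (exp (L * s) * L) = L * bt s + a"
      unfolding bt_def using L by (simp add: field_simps)
    ultimately show ?thesis by simp
  qed
  have phider: "(ph has_derivative ph' s) (at s)" if "0 < s" "s < ts" for s
  proof -
    have wd: "(w has_derivative (\<lambda>h. h *\<^sub>R w' s)) (at s)"
      using der[of s] that tsT unfolding has_vector_derivative_def by simp
    have bd: "(bt has_derivative (\<lambda>h. h * (L * bt s + a))) (at s)"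
      using bder[of s] unfolding has_field_derivative_def by (simp add: mult.commute[of _ "L * bt s + a"])
    have d1: "((\<lambda>s. inner (w s) (w s)) has_derivative (\<lambda>h. inner (w s) (h *\<^sub>R w' s) + inner (h *\<^sub>R w' s) (w s))) (at s)"
      by (rule has_derivative_inner[OF wd wd])
    have d2: "((\<lambda>s. bt s * bt s) has_derivative (\<lambda>h. bt s * (h * (L * bt s + a)) + h * (L * bt s + a) * bt s)) (at s)"
      by (rule has_derivative_mult[OF bd bd])
    have "(ph has_derivative (\<lambda>h. (inner (w s) (h *\<^sub>R w' s) + inner (h *\<^sub>R w' s) (w s)) - (bt s * (h * (L * bt s + a)) + h * (L * bt s + a) * bt s))) (at s)"
      unfolding ph_def power2_eq_square by (rule has_derivative_diff[OF d1 d2])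
    then show ?thesis unfolding ph'_def
      by (rule has_derivative_eq_rhs) (auto simp: fun_eq_iff algebra_simps inner_commute)
  qed
  have phicont: "continuous_on {0..ts} ph" unfolding ph_def
    using continuous_on_subset[OF cont, of "{0..ts}"] tsT
    by (auto intro!: continuous_intros contb)
  obtain xx where xi: "0 < xx" "xx < ts" "ph ts - ph 0 = ph' xx (ts - 0)"
    using mvt[OF ts0 phicont phider] by blast
  have nb: "norm (w xx) < bt xx" using below xi by simp
  have "norm (w xx) < r" using nb bmono[of xx T] r xi tsT unfolding bt_def by simp
  then have wb: "norm (w' xx) \<le> a + L * norm (w xx)" using bnd[of xx] xi tsT by simp
  have "inner (w xx) (w' xx) \<le> norm (w xx) * norm (w' xx)" by (rule norm_cauchy_schwarz)
  also have "\<dots> \<le> norm (w xx) * (a + L * norm (w xx))" using wb by (simp add: mult_left_mono)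
  also have "\<dots> \<le> bt xx * (L * bt xx + a)"
  proof -
    have "L * norm (w xx) \<le> L * bt xx" using nb L by simp
    then show ?thesis using nb a L
      by (smt (verit, best) mult_mono norm_ge_zero zero_le_mult_iff)
  qed
  finally have "ph' xx 1 \<le> 0" unfolding ph'_def by simp
  then have "ph ts \<le> ph 0" using xi ts0 unfolding ph'_def by (smt (verit) mult_nonneg_nonpos)
  moreover have "ph 0 < 0" unfolding ph_def b0 using w0
    by (simp add: dot_square_norm power_strict_mono)
  moreover have "ph ts \<ge> 0"
  proof -
    have "bt ts \<le> norm (w ts)" using tsS unfolding S_def by auto
    moreover have "0 \<le> bt ts" using bmono[of 0 ts] b0 c ts0 by simp
    ultimately show ?thesis unfolding ph_def by (simp add: dot_square_norm power_mono)
  qed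
  ultimately show False by simp
qed

lemma exp_integral:
  fixes t L :: real
  assumes "0 \<le> t" "0 < L"
  shows "((\<lambda>s. exp (2 * L * s)) has_integral (exp (2 * L * t) - 1) / (2 * L)) {0..t}"
proof -
  have "((\<lambda>s. exp (2 * L * s)) has_integral (exp (2 * L * t) / (2 * L) - exp (2 * L * 0) / (2 * L))) {0..t}"
  proof (rule fundamental_theorem_of_calculus[OF assms(1)])
    fix x assume "x \<in> {0..t}"
    have "((\<lambda>s. exp (2 * L * s) / (2 * L)) has_real_derivative exp (2 * L * x)) (at x)"
      using assms(2) by (auto intro!: derivative_eq_intros)
    then show "((\<lambda>s. exp (2 * L * s) / (2 * L)) has_vector_derivative exp (2 * L * x)) (at x within {0..t})"
      by (simp add: has_real_derivative_iff_has_vector_derivative has_vector_derivative_at_within)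
  qed
  then show ?thesis by (simp add: diff_divide_distrib)
qed

fun picard :: "(real \<Rightarrow> 'a::euclidean_space \<Rightarrow>\<^sub>L 'a) \<Rightarrow> 'a \<Rightarrow> nat \<Rightarrow> real \<Rightarrow> 'a" where
  "picard A h 0 = (\<lambda>t. h)"
| "picard A h (Suc k) = (\<lambda>t. h + integral {0..t} (\<lambda>s. A s (picard A h k s)))"

lemma picard_cont:
  assumes "continuous_on {0..T} A"
  shows "continuous_on {0..T} (picard A h k)"
proof (induction k)
  case 0 then show ?case by simp
next
  case (Suc k)
  have "continuous_on {0..T} (\<lambda>s. A s (picard A h k s))"
    using assms Suc by (intro continuous_intros) auto
  then have "(\<lambda>s. A s (picard A h k s)) integrable_on {0..T}"
    by (rule integrable_continuous_real)
  then show ?case by (auto intro!: continuous_intros indefinite_integral_continuous_1)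
qed

lemma int_step:
  fixes A :: "real \<Rightarrow> 'a::euclidean_space \<Rightarrow>\<^sub>L 'a" and u :: "real \<Rightarrow> 'a"
  assumes t: "0 \<le> t" and L: "0 < L" and AL: "\<And>s. s \<in> {0..t} \<Longrightarrow> norm (A s) \<le> L"
    and contA: "continuous_on {0..t} A" and contu: "continuous_on {0..t} u"
    and ub: "\<And>s. s \<in> {0..t} \<Longrightarrow> norm (u s) \<le> B * exp (2 * L * s) / 2^k"
  shows "norm (integral {0..t} (\<lambda>s. A s (u s))) \<le> B * exp (2 * L * t) / 2^(Suc k)"
proof -
  have i1: "(\<lambda>s. A s (u s)) integrable_on {0..t}"
    by (rule integrable_continuous_real) (intro continuous_intros contA contu)
  have gi: "((\<lambda>s. (L * B / 2^k) * exp (2 * L * s)) has_integral (L * B / 2^k) * ((exp (2 * L * t) - 1) / (2 * L))) {0..t}"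
    by (rule has_integral_mult_right[OF exp_integral[OF t L]])
  have "norm (integral {0..t} (\<lambda>s. A s (u s))) \<le> integral {0..t} (\<lambda>s. (L * B / 2^k) * exp (2 * L * s))"
  proof (rule integral_norm_bound_integral[OF i1])
    show "(\<lambda>s. (L * B / 2^k) * exp (2 * L * s)) integrable_on {0..t}" using gi by blast
    fix s assume s: "s \<in> {0..t}"
    have "norm (A s (u s)) \<le> norm (A s) * norm (u s)" by (rule norm_blinfun)
    also have "\<dots> \<le> L * (B * exp (2 * L * s) / 2^k)"
      using AL[OF s] ub[OF s] L by (intro mult_mono) auto
    finally show "norm (A s (u s)) \<le> (L * B / 2^k) * exp (2 * L * s)" by simp
  qed
  also have "\<dots> = (L * B / 2^k) * ((exp (2 * L * t) - 1) / (2 * L))" using gi by (rule integral_unique)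
  also have "\<dots> = B * (exp (2 * L * t) - 1) / 2^(Suc k)" using L by (simp add: field_simps)
  also have "\<dots> \<le> B * exp (2 * L * t) / 2^(Suc k)"
  proof -
    have "0 \<le> B / 2^k" using ub[of 0] t norm_ge_zero[of "u 0"] by (simp del: norm_ge_zero)
    moreover have "(0::real) < 2^k" by simp
    ultimately have "0 \<le> B" by (simp add: zero_le_divide_iff)
    then show ?thesis by (simp add: divide_right_mono mult_left_mono)
  qed
  finally show ?thesis .
qed

lemma picard_bound:
  assumes contA: "continuous_on {0..T} A" and L: "0 < L" and AL: "\<And>t. t \<in> {0..T} \<Longrightarrow> norm (A t) \<le> L"
  shows "t \<in> {0..T} \<Longrightarrow> norm (picard A h (Suc k) t - picard A h k t) \<le> norm h * exp (2 * L * t) / 2^(Suc k)"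
proof (induction k arbitrary: t)
  case 0
  have "norm (integral {0..t} (\<lambda>s. A s h)) \<le> norm h * exp (2 * L * t) / 2^(Suc 0)"
  proof (intro int_step[where k=0, OF _ L])
    show "norm h \<le> norm h * exp (2 * L * s) / 2 ^ 0" if "s \<in> {0..t}" for s
      using that L by (simp add: mult_le_cancel_left1)
  qed (use 0 contA AL in \<open>auto intro: continuous_on_subset\<close>)
  then show ?case by simp
next
  case (Suc k)
  have ct: "continuous_on {0..t} A" using contA Suc.prems by (auto intro: continuous_on_subset)
  have cp: "continuous_on {0..t} (picard A h j)" for j using picard_cont[OF ct] .
  have i: "(\<lambda>s. A s (picard A h j s)) integrable_on {0..t}" for j
    by (rule integrable_continuous_real) (intro continuous_intros ct cp)
  have "picard A h (Suc (Suc k)) t - picard A h (Suc k) t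
      = integral {0..t} (\<lambda>s. A s (picard A h (Suc k) s - picard A h k s))"
    using integral_diff[OF i i, of "Suc k" k] by (simp add: blinfun.diff_right)
  also have "norm \<dots> \<le> norm h * exp (2 * L * t) / 2^(Suc (Suc k))"
  proof (rule int_step[OF _ L])
    show "0 \<le> t" using Suc.prems by simp
    show "norm (A s) \<le> L" if "s \<in> {0..t}" for s using AL that Suc.prems by auto
    show "continuous_on {0..t} A" by (rule ct)
    show "continuous_on {0..t} (\<lambda>s. picard A h (Suc k) s - picard A h k s)"
      by (intro continuous_intros cp)
    show "norm (picard A h (Suc k) s - picard A h k s) \<le> norm h * exp (2 * L * s) / 2 ^ Suc k"
      if "s \<in> {0..t}" for s using Suc.IH[of s] that Suc.prems by auto
  qed
  finally show ?case .
qed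

lemma picard_0: "picard A h n 0 = h"
  by (cases n) auto

lemma lin_ode_exists:
  fixes A :: "real \<Rightarrow> 'a::euclidean_space \<Rightarrow>\<^sub>L 'a"
  assumes T: "0 \<le> T" and contA: "continuous_on {0..T} A"
  shows "\<exists>y. continuous_on {0..T} y \<and> y 0 = h \<and> (\<forall>t\<in>{0<..<T}. (y has_vector_derivative A t (y t)) (at t))"
proof -
  obtain L where L: "0 < L" "\<And>t. t \<in> {0..T} \<Longrightarrow> norm (A t) \<le> L"
    using compact_imp_bounded[OF compact_continuous_image[OF contA compact_Icc]]
    unfolding bounded_pos by auto
  define d where "d i t = picard A h (Suc i) t - picard A h i t" for i t
  define M where "M i = (norm h * exp (2 * L * T) / 2) * (1/2)^i" for i :: nat
  have dM: "norm (d i t) \<le> M i" if "t \<in> {0..T}" for i t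
  proof -
    have "norm (d i t) \<le> norm h * exp (2 * L * t) / 2^(Suc i)"
      unfolding d_def by (rule picard_bound[OF contA L that])
    also have "\<dots> \<le> norm h * exp (2 * L * T) / 2^(Suc i)"
      using that L by (intro divide_right_mono mult_left_mono) auto
    also have "\<dots> = M i" unfolding M_def by (simp add: power_one_over field_simps)
    finally show ?thesis .
  qed
  have sM: "summable M" unfolding M_def by (intro summable_mult summable_geometric) simp
  have ul: "uniform_limit {0..T} (\<lambda>n t. \<Sum>i<n. d i t) (\<lambda>t. suminf (\<lambda>i. d i t)) sequentially"
    by (rule Weierstrass_m_test[OF _ sM]) (use dM in auto)
  define y where "y t = h + suminf (\<lambda>i. d i t)" for t
  have pic_eq: "picard A h n t = h + (\<Sum>i<n. d i t)" for n t
    unfolding d_def using sum_lessThan_telescope[of "\<lambda>i. picard A h i t" n] by simp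
  have ulp: "uniform_limit {0..T} (\<lambda>n. picard A h n) y sequentially"
  proof -
    have "uniform_limit {0..T} (\<lambda>n t. h + (\<Sum>i<n. d i t)) y sequentially"
      unfolding y_def by (rule uniform_limit_add[OF uniform_limit_const ul])
    then show ?thesis by (simp add: pic_eq[abs_def])
  qed
  have conty: "continuous_on {0..T} y"
    by (rule uniform_limit_theorem[OF _ ulp]) (auto intro: always_eventually picard_cont[OF contA])
  have y0: "y 0 = h"
  proof -
    have "(\<lambda>n. picard A h n 0) \<longlonglongrightarrow> y 0" using tendsto_uniform_limitI[OF ulp] T by auto
    then show ?thesis by (simp add: picard_0 LIMSEQ_const_iff)
  qed
  define f where "f s = A s (y s)" for s
  have contf: "continuous_on {0..T} f" unfolding f_def by (intro continuous_intros contA conty)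
  have inteq: "y t = h + integral {0..t} f" if t: "t \<in> {0..T}" for t
  proof -
    have sub: "{0..t} \<subseteq> {0..T}" using t by auto
    have ulA: "uniform_limit {0..t} (\<lambda>n s. A s (picard A h n s)) f sequentially"
    proof (rule uniform_limitI)
      fix e :: real assume e: "0 < e"
      have "\<forall>\<^sub>F n in sequentially. \<forall>s\<in>{0..T}. dist (picard A h n s) (y s) < e / L"
        using uniform_limitD[OF ulp] e L by simp
      then show "\<forall>\<^sub>F n in sequentially. \<forall>s\<in>{0..t}. dist (A s (picard A h n s)) (f s) < e"
      proof eventually_elim
        case (elim n)
        show ?case
        proof
          fix s assume s: "s \<in> {0..t}"
          then have sT: "s \<in> {0..T}" using sub by auto
          have "dist (A s (picard A h n s)) (f s) = norm (A s (picard A h n s - y s))"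
            unfolding f_def dist_norm by (simp add: blinfun.diff_right)
          also have "\<dots> \<le> norm (A s) * norm (picard A h n s - y s)" by (rule norm_blinfun)
          also have "\<dots> \<le> L * norm (picard A h n s - y s)" using L(2)[OF sT] by (simp add: mult_right_mono)
          also have "\<dots> < L * (e / L)" using elim sT L(1) by (intro mult_strict_left_mono) (auto simp: dist_norm)
          also have "\<dots> = e" using L(1) by simp
          finally show "dist (A s (picard A h n s)) (f s) < e" .
        qed
      qed
    qed
    have cn: "continuous_on {0..t} (\<lambda>s. A s (picard A h n s))" for n
      using continuous_on_subset[OF contA sub] continuous_on_subset[OF picard_cont[OF contA] sub]
      by (intro continuous_intros) auto
    obtain I J where IJ: "\<And>n. ((\<lambda>s. A s (picard A h n s)) has_integral I n) {0..t}"
      "(f has_integral J) {0..t}" "I \<longlonglongrightarrow> J"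
      using uniform_limit_integral[OF ulA cn] by auto
    have "(\<lambda>n. picard A h (Suc n) t) \<longlonglongrightarrow> h + J"
    proof -
      have "(\<lambda>n. integral {0..t} (\<lambda>s. A s (picard A h n s))) = I"
        using IJ(1) by (auto simp: integral_unique)
      then show ?thesis using IJ(3) by (auto intro!: tendsto_add)
    qed
    moreover have "(\<lambda>n. picard A h (Suc n) t) \<longlonglongrightarrow> y t"
      using tendsto_uniform_limitI[OF ulp t] by (rule LIMSEQ_Suc)
    ultimately have "y t = h + J" using LIMSEQ_unique by blast
    then show ?thesis using IJ(2) by (simp add: integral_unique)
  qed
  have "(y has_vector_derivative A t (y t)) (at t)" if t: "t \<in> {0<..<T}" for t
  proof -
    have tT: "t \<in> {0..T}" using t by auto
    have "((\<lambda>u. h + integral {0..u} f) has_vector_derivative f t) (at t within {0..T})"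
      using integral_has_vector_derivative[OF contf tT]
      by (auto intro!: derivative_eq_intros)
    then have "(y has_vector_derivative f t) (at t within {0..T})"
      by (rule has_vector_derivative_transform[OF tT inteq, rotated])
    then show ?thesis using t at_within_Icc_at[of 0 t T] unfolding f_def by simp
  qed
  then show ?thesis using conty y0 by blast
qed

lemma lin_ode_unique:
  fixes A :: "real \<Rightarrow> 'a::euclidean_space \<Rightarrow>\<^sub>L 'a"
  assumes T: "0 \<le> T" and AL: "\<And>t. t \<in> {0..T} \<Longrightarrow> norm (A t) \<le> L"
    and cont: "continuous_on {0..T} y" and y0: "y 0 = 0"
    and der: "\<And>t. t \<in> {0<..<T} \<Longrightarrow> (y has_vector_derivative A t (y t)) (at t)"
    and t: "t \<in> {0..T}"
  shows "y t = 0"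
proof (rule ccontr)
  assume ne: "y t \<noteq> 0"
  define L' where "L' = max L 0 + 1"
  have L': "0 < L'" unfolding L'_def by simp
  define c where "c = norm (y t) / exp (L' * T)"
  have c: "0 < c" unfolding c_def using ne by simp
  have "norm (y t) < (c + 0/L') * exp (L' * t) - 0/L'"
  proof (rule gronwall[OF T L' order.refl c _ cont])
    show "norm (y 0) < c" using y0 c by simp
    show "(y has_vector_derivative A s (y s)) (at s)" if "0 < s" "s < T" for s using der that by auto
    show "norm (A s (y s)) \<le> 0 + L' * norm (y s)" if "0 \<le> s" "s \<le> T" for s
    proof -
      have "norm (A s (y s)) \<le> norm (A s) * norm (y s)" by (rule norm_blinfun)
      also have "\<dots> \<le> L' * norm (y s)" using AL[of s] that unfolding L'_def
        by (intro mult_right_mono) auto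
      finally show ?thesis by simp
    qed
    show "(c + 0 / L') * exp (L' * T) - 0 / L' \<le> (c + 0 / L') * exp (L' * T) - 0 / L' + 1" by simp
  qed (use t in auto)
  also have "\<dots> \<le> c * exp (L' * T)" using t L' c by simp
  also have "\<dots> = norm (y t)" unfolding c_def by simp
  finally show False by simp
qed

lemma flow_deriv:
  fixes F :: "'a::euclidean_space \<Rightarrow> 'a" and DF :: "'a \<Rightarrow> 'a \<Rightarrow>\<^sub>L 'a"
    and Phi :: "real \<Rightarrow> 'a \<Rightarrow> 'a"
  assumes Fd: "\<And>w. (F has_derivative blinfun_apply (DF w)) (at w)"
    and DFc: "continuous_on UNIV DF"
    and flow: "\<And>w t. ((\<lambda>s. Phi s w) has_vector_derivative F (Phi t w)) (at t)"
    and flow0: "\<And>w. Phi 0 w = w"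
    and T: "0 \<le> T"
  shows "\<exists>Y. (Phi T has_derivative Y) (at z) \<and>
     (\<forall>h. \<exists>y. continuous_on {0..T} y \<and> y 0 = h \<and>
        (\<forall>t\<in>{0<..<T}. (y has_vector_derivative DF (Phi t z) (y t)) (at t)) \<and> Y h = y T)
     \<and> (\<exists>L. \<forall>t\<in>{0..T}. norm (DF (Phi t z)) \<le> L)"
proof -
  define x where "x t = Phi t z" for t
  have contPhi: "continuous_on S (\<lambda>t. Phi t w)" for S w
    by (rule continuous_at_imp_continuous_on) (use flow has_vector_derivative_continuous in blast)
  have contx: "continuous_on S x" for S unfolding x_def by (rule contPhi)
  define K where "K = (\<lambda>(t,u). x t + u) ` ({0..T} \<times> cball 0 1)"
  have cK: "compact K" unfolding K_def
  proof (rule compact_continuous_image)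
    have "continuous_on ({0..T} \<times> cball 0 1) (\<lambda>p. x (fst p))"
      by (rule continuous_on_compose2[OF contx continuous_on_fst]) auto
    then show "continuous_on ({0..T} \<times> cball 0 1) (\<lambda>(t, u). x t + u)"
      by (auto intro!: continuous_intros simp: case_prod_unfold)
  qed (auto intro!: compact_Times)
  have xK: "x t + u \<in> K" if "t \<in> {0..T}" "norm u \<le> 1" for t u
    unfolding K_def using that by (auto intro!: image_eqI[of _ _ "(t,u)"])
  obtain L0 where L0: "\<And>w. w \<in> K \<Longrightarrow> norm (DF w) \<le> L0"
    using compact_imp_bounded[OF compact_continuous_image[OF continuous_on_subset[OF DFc] cK]]
    unfolding bounded_iff by auto
  define L where "L = max L0 0 + 1"
  have L: "0 < L" unfolding L_def by simp
  have LK: "norm (DF w) \<le> L" if "w \<in> K" for w using L0[OF that] unfolding L_def by simp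
  define A where "A t = DF (x t)" for t
  have contA: "continuous_on {0..T} A" unfolding A_def
    by (rule continuous_on_compose2[OF DFc contx]) auto
  have AL: "norm (A t) \<le> L" if "t \<in> {0..T}" for t
    unfolding A_def using LK xK[OF that, of 0] by simp
  define P where "P h y \<longleftrightarrow> continuous_on {0..T} y \<and> y 0 = h \<and>
        (\<forall>t\<in>{0<..<T}. (y has_vector_derivative A t (y t)) (at t))" for h y
  define ys where "ys h = (SOME y. P h y)" for h
  have ysP: "P h (ys h)" for h
  proof -
    have "\<exists>y. P h y" using lin_ode_exists[OF T contA, of h] unfolding P_def .
    then show ?thesis unfolding ys_def by (rule someI_ex)
  qed
  have uniq: "y1 t = y2 t" if "P h y1" "P h y2" "t \<in> {0..T}" for h y1 y2 t
  proof -
    have "(\<lambda>s. y1 s - y2 s) t = 0"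
    proof (rule lin_ode_unique[OF T AL])
      show "continuous_on {0..T} (\<lambda>s. y1 s - y2 s)" using that unfolding P_def by (auto intro!: continuous_intros)
      show "y1 0 - y2 0 = 0" using that unfolding P_def by simp
      show "((\<lambda>s. y1 s - y2 s) has_vector_derivative A s (y1 s - y2 s)) (at s)" if "s \<in> {0<..<T}" for s
        using \<open>P h y1\<close> \<open>P h y2\<close> that unfolding P_def
        by (auto intro!: derivative_eq_intros simp: blinfun.diff_right)
    qed (use that in auto)
    then show ?thesis by simp
  qed
  define Y where "Y h = ys h T" for h
  have linY: "linear Y"
  proof (rule linearI)
    fix h k
    have "P (h + k) (\<lambda>s. ys h s + ys k s)"
      using ysP[of h] ysP[of k] unfolding P_def
      by (auto intro!: continuous_intros derivative_eq_intros simp: blinfun.add_right)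
    then show "Y (h + k) = Y h + Y k" unfolding Y_def using uniq[OF ysP[of "h+k"], of _ T] T by auto
  next
    fix c h
    have "P (c *\<^sub>R h) (\<lambda>s. c *\<^sub>R ys h s)"
      using ysP[of h] unfolding P_def
      by (auto intro!: continuous_intros derivative_eq_intros simp: blinfun.scaleR_right)
    then show "Y (c *\<^sub>R h) = c *\<^sub>R Y h" unfolding Y_def using uniq[OF ysP[of "c *\<^sub>R h"], of _ T] T by auto
  qed
  have lip: "norm (F (x t + u) - F (x t)) \<le> L * norm u" if t: "t \<in> {0..T}" and u: "norm u < 1" for t u
  proof -
    have "norm (F (x t + u) - F (x t)) \<le> L * norm (x t + u - x t)"
    proof (rule differentiable_bound[of "ball (x t) 1" F "\<lambda>w. blinfun_apply (DF w)"])
      show "(F has_derivative blinfun_apply (DF w)) (at w within ball (x t) 1)" for w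
        using Fd has_derivative_at_withinI by blast
      show "onorm (blinfun_apply (DF w)) \<le> L" if "w \<in> ball (x t) 1" for w
      proof -
        have "w = x t + (w - x t)" by simp
        moreover have "norm (w - x t) \<le> 1" using that by (simp add: dist_norm norm_minus_commute)
        ultimately have "w \<in> K" using xK[OF t] by metis
        then show ?thesis using LK by (simp add: norm_blinfun.rep_eq)
      qed
    qed (use u in \<open>auto simp: dist_norm\<close>)
    then show ?thesis by simp
  qed
  have rem: "\<exists>\<delta>>0. \<delta> \<le> 1 \<and> (\<forall>t\<in>{0..T}. \<forall>u. norm u < \<delta> \<longrightarrow>
      norm (F (x t + u) - F (x t) - DF (x t) u) \<le> \<epsilon> * norm u)" if eps: "0 < \<epsilon>" for \<epsilon>
  proof -
    have "uniformly_continuous_on K DF"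
      by (rule compact_uniformly_continuous[OF continuous_on_subset[OF DFc] cK]) simp
    then obtain d where d: "0 < d" "\<And>w w'. w \<in> K \<Longrightarrow> w' \<in> K \<Longrightarrow> dist w' w < d \<Longrightarrow> dist (DF w') (DF w) < \<epsilon>"
      unfolding uniformly_continuous_on_def using eps by metis
    define \<delta> where "\<delta> = min d 1"
    have "\<forall>t\<in>{0..T}. \<forall>u. norm u < \<delta> \<longrightarrow> norm (F (x t + u) - F (x t) - DF (x t) u) \<le> \<epsilon> * norm u"
    proof (intro ballI allI impI)
      fix t and u :: 'a assume t: "t \<in> {0..T}" and u: "norm u < \<delta>"
      define g where "g w = F w - DF (x t) w" for w
      have inK: "w \<in> K" if "w \<in> ball (x t) \<delta>" for w
      proof -
        have "w = x t + (w - x t)" by simp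
        moreover have "norm (w - x t) \<le> 1" using that by (simp add: dist_norm norm_minus_commute \<delta>_def)
        ultimately show "w \<in> K" using xK[OF t] by metis
      qed
      have "norm (g (x t + u) - g (x t)) \<le> \<epsilon> * norm (x t + u - x t)"
      proof (rule differentiable_bound[of "ball (x t) \<delta>" g "\<lambda>w. blinfun_apply (DF w - DF (x t))"])
        show "(g has_derivative blinfun_apply (DF w - DF (x t))) (at w within ball (x t) \<delta>)" for w
          unfolding g_def
          by (rule has_derivative_at_withinI) (auto intro!: derivative_eq_intros Fd simp: blinfun.diff_left)
        show "onorm (blinfun_apply (DF w - DF (x t))) \<le> \<epsilon>" if "w \<in> ball (x t) \<delta>" for w
        proof -
          have "dist (DF w) (DF (x t)) < \<epsilon>"
            using d(2)[OF xK[OF t, of 0, simplified] inK[OF that]] that by (simp add: \<delta>_def dist_commute)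
          then show ?thesis by (simp add: norm_blinfun.rep_eq[symmetric] dist_norm)
        qed
      qed (use u \<delta>_def d in \<open>auto simp: dist_norm\<close>)
      then show "norm (F (x t + u) - F (x t) - DF (x t) u) \<le> \<epsilon> * norm u"
        unfolding g_def by (simp add: blinfun.add_right algebra_simps)
    qed
    then show ?thesis using d(1) unfolding \<delta>_def by (intro exI[of _ "min d 1"]) auto
  qed
  have "(Phi T has_derivative Y) (at z)"
    unfolding has_derivative_at_alt
  proof (intro conjI allI impI)
    show "bounded_linear Y" using linY linear_conv_bounded_linear by blast
    fix e :: real assume e: "0 < e"
    define E where "E = exp (L * T)"
    have E: "1 \<le> E" unfolding E_def using L T by simp
    define C1 where "C1 = 2 * E"
    define C2 where "C2 = (1 + C1 / L) * E"
    have C2: "0 < C2" unfolding C2_def C1_def using E L by (simp add: add_pos_nonneg)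
    define \<epsilon> where "\<epsilon> = e / C2"
    have eps: "0 < \<epsilon>" unfolding \<epsilon>_def using e C2 by simp
    obtain \<delta> where \<delta>: "0 < \<delta>" "\<delta> \<le> 1" "\<And>t u. t \<in> {0..T} \<Longrightarrow> norm u < \<delta> \<Longrightarrow>
        norm (F (x t + u) - F (x t) - DF (x t) u) \<le> \<epsilon> * norm u"
      using rem[OF eps] by blast
    show "\<exists>d>0. \<forall>y. norm (y - z) < d \<longrightarrow> norm (Phi T y - Phi T z - Y (y - z)) \<le> e * norm (y - z)"
    proof (intro exI[of _ "\<delta> / C1"] conjI allI impI)
      show "0 < \<delta> / C1" using \<delta> E unfolding C1_def by simp
      fix y assume hy: "norm (y - z) < \<delta> / C1"
      define h where "h = y - z"
      show "norm (Phi T y - Phi T z - Y (y - z)) \<le> e * norm (y - z)"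
      proof (cases "h = 0")
        case True
        then show ?thesis unfolding h_def using linear_0[OF linY] by simp
      next
        case False
        have hpos: "0 < norm h" using False by simp
        have hC1: "C1 * norm h < \<delta>" using hy E unfolding h_def C1_def by (simp add: field_simps)
        define w where "w t = Phi t y - x t" for t
        have w0: "w 0 = h" unfolding w_def x_def h_def by (simp add: flow0)
        have contw: "continuous_on {0..T} w" unfolding w_def by (intro continuous_intros contPhi contx)
        have derw: "(w has_vector_derivative (F (x t + w t) - F (x t))) (at t)" for t
          unfolding w_def x_def by (auto intro!: derivative_eq_intros flow)
        have wb: "norm (w t) < C1 * norm h" if t: "t \<in> {0..T}" for t
        proof -
          have "norm (w t) < (2 * norm h + 0 / L) * exp (L * t) - 0 / L"
          proof (rule gronwall[OF T L order.refl _ _ contw derw])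
            show "0 < 2 * norm h" using hpos by simp
            show "norm (w 0) < 2 * norm h" using w0 hpos by simp
            show "norm (F (x s + w s) - F (x s)) \<le> 0 + L * norm (w s)" if "0 \<le> s" "s \<le> T" "norm (w s) < 1" for s
              using lip[of s "w s"] that by simp
            show "(2 * norm h + 0 / L) * exp (L * T) - 0 / L \<le> 1"
              using hC1 \<delta>(2) unfolding C1_def E_def by (simp add: mult.commute mult.left_commute)
          qed (use t in auto)
          also have "\<dots> \<le> C1 * norm h" unfolding C1_def E_def using t L by (simp add: mult.commute mult_left_mono)
          finally show ?thesis .
        qed
        define yh where "yh = ys h"
        have yhP: "P h yh" unfolding yh_def by (rule ysP)
        define ee where "ee t = w t - yh t" for t
        define a where "a = \<epsilon> * C1 * norm h"
        have a: "0 \<le> a" unfolding a_def C1_def using eps E by simp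
        have c: "0 < \<epsilon> * norm h" using eps hpos by simp
        have "norm (ee T) < (\<epsilon> * norm h + a / L) * exp (L * T) - a / L"
        proof (rule gronwall[OF T L a c, where r = "(\<epsilon> * norm h + a / L) * exp (L * T) - a / L"])
          show "norm (ee 0) < \<epsilon> * norm h" unfolding ee_def using w0 yhP c unfolding P_def by simp
          show "continuous_on {0..T} ee" unfolding ee_def using contw yhP unfolding P_def
            by (auto intro!: continuous_intros)
          show "(ee has_vector_derivative (F (x t + w t) - F (x t) - A t (yh t))) (at t)" if "0 < t" "t < T" for t
            unfolding ee_def using derw[of t] yhP that unfolding P_def
            by (auto intro!: derivative_eq_intros)
          show "norm (F (x t + w t) - F (x t) - A t (yh t)) \<le> a + L * norm (ee t)" if t: "0 \<le> t" "t \<le> T" for t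
          proof -
            have tT: "t \<in> {0..T}" using t by simp
            have eq: "F (x t + w t) - F (x t) - A t (yh t) =
                (F (x t + w t) - F (x t) - DF (x t) (w t)) + A t (ee t)"
              unfolding A_def ee_def by (simp add: blinfun.diff_right)
            have "norm (F (x t + w t) - F (x t) - DF (x t) (w t)) \<le> \<epsilon> * norm (w t)"
              using \<delta>(3)[OF tT] wb[OF tT] hC1 by simp
            also have "\<dots> \<le> a" unfolding a_def using wb[OF tT] eps by simp
            finally have 1: "norm (F (x t + w t) - F (x t) - DF (x t) (w t)) \<le> a" .
            have 2: "norm (A t (ee t)) \<le> L * norm (ee t)"
              using norm_blinfun[of "A t" "ee t"] AL[OF tT] by (smt (verit) mult_right_mono norm_ge_zero)
            show ?thesis unfolding eq using 1 2 norm_triangle_ineq[of "F (x t + w t) - F (x t) - DF (x t) (w t)" "A t (ee t)"]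
              by simp
          qed
        qed (use T in auto)
        also have "\<dots> \<le> (\<epsilon> * norm h + a / L) * E" unfolding E_def using a L by simp
        also have "\<dots> = \<epsilon> * C2 * norm h" unfolding a_def C2_def using L by (simp add: field_simps)
        also have "\<dots> = e * norm h" unfolding \<epsilon>_def using C2 by simp
        finally have "norm (ee T) < e * norm h" .
        moreover have "ee T = Phi T y - Phi T z - Y (y - z)"
          unfolding ee_def w_def x_def Y_def yh_def h_def by simp
        ultimately show ?thesis unfolding h_def by simp
      qed
    qed
  qed
  moreover have "\<forall>h. \<exists>y. continuous_on {0..T} y \<and> y 0 = h \<and>
        (\<forall>t\<in>{0<..<T}. (y has_vector_derivative DF (Phi t z) (y t)) (at t)) \<and> Y h = y T"
    using ysP unfolding P_def Y_def A_def x_def by blast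
  moreover have "\<exists>L. \<forall>t\<in>{0..T}. norm (DF (Phi t z)) \<le> L"
    using AL unfolding A_def x_def by blast
  ultimately show ?thesis by blast
qed

lemma bounded_linear_Jmat: "bounded_linear Jmat"
  using linear_Jmat linear_conv_bounded_linear by blast

lemma w0_deriv:
  assumes "(y1 has_vector_derivative d1) (at s)" "(y2 has_vector_derivative d2) (at s)"
  shows "((\<lambda>s. w0 (y1 s) (y2 s)) has_derivative (\<lambda>h. h * (w0 d1 (y2 s) + w0 (y1 s) d2))) (at s)"
proof -
  have j: "((\<lambda>s. Jmat (y1 s)) has_derivative (\<lambda>h. Jmat (h *\<^sub>R d1))) (at s)"
    using bounded_linear.has_derivative[OF bounded_linear_Jmat assms(1)[unfolded has_vector_derivative_def]] .
  have "((\<lambda>s. inner (Jmat (y1 s)) (y2 s)) has_derivative (\<lambda>h. inner (Jmat (y1 s)) (h *\<^sub>R d2) + inner (Jmat (h *\<^sub>R d1)) (y2 s))) (at s)"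
    by (rule has_derivative_inner[OF j assms(2)[unfolded has_vector_derivative_def]])
  then show ?thesis unfolding w0_def
    by (rule has_derivative_eq_rhs) (auto simp: fun_eq_iff Jmat_scale algebra_simps)
qed

lemma symp_pres:
  assumes T: "0 \<le> T" and sym: "\<And>t p q. w0 (blinfun_apply (A t) p) q + w0 p (blinfun_apply (A t) q) = 0"
    and c1: "continuous_on {0..T} y1" and d1: "\<And>t. t \<in> {0<..<T} \<Longrightarrow> (y1 has_vector_derivative A t (y1 t)) (at t)"
    and c2: "continuous_on {0..T} y2" and d2: "\<And>t. t \<in> {0<..<T} \<Longrightarrow> (y2 has_vector_derivative A t (y2 t)) (at t)"
  shows "w0 (y1 T) (y2 T) = w0 (y1 0) (y2 0)"
proof (cases "T = 0")
  case False
  then have T0: "0 < T" using T by simp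
  have cont: "continuous_on {0..T} (\<lambda>s. w0 (y1 s) (y2 s))" unfolding w0_def
    using c1 c2 by (intro continuous_intros continuous_on_compose2[OF linear_continuous_on[OF bounded_linear_Jmat] c1]) auto
  obtain xi where "0 < xi" "xi < T" "w0 (y1 T) (y2 T) - w0 (y1 0) (y2 0) =
      (\<lambda>h. h * (w0 (A xi (y1 xi)) (y2 xi) + w0 (y1 xi) (A xi (y2 xi)))) (T - 0)"
    by (rule mvt[OF T0 cont w0_deriv[OF d1 d2]]) auto
  then show ?thesis using sym by simp
qed simp

lemma flow_props_pos:
  fixes F :: "(real^'n) \<times> (real^'n) \<Rightarrow> (real^'n) \<times> (real^'n)" and DF :: "(real^'n) \<times> (real^'n) \<Rightarrow> ((real^'n) \<times> (real^'n)) \<Rightarrow>\<^sub>L ((real^'n) \<times> (real^'n))"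
    and Phi :: "real \<Rightarrow> (real^'n) \<times> (real^'n) \<Rightarrow> (real^'n) \<times> (real^'n)"
  assumes Fd: "\<And>w. (F has_derivative blinfun_apply (DF w)) (at w)"
    and DFc: "continuous_on UNIV DF"
    and sym: "\<And>w p q. w0 (DF w p) q + w0 p (DF w q) = 0"
    and flow: "\<And>w t. ((\<lambda>s. Phi s w) has_vector_derivative F (Phi t w)) (at t)"
    and flow0: "\<And>w. Phi 0 w = w"
    and T: "0 \<le> T"
  shows "\<exists>Y. (Phi T has_derivative Y) (at z) \<and> (\<forall>p q. w0 (Y p) (Y q) = w0 p q) \<and>
          (Phi T z = z \<longrightarrow> Y (F z) = F z)"
proof -
  obtain Y L where Y: "(Phi T has_derivative Y) (at z)"
    and sol: "\<And>h. \<exists>y. continuous_on {0..T} y \<and> y 0 = h \<and>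
        (\<forall>t\<in>{0<..<T}. (y has_vector_derivative DF (Phi t z) (y t)) (at t)) \<and> Y h = y T"
    and L: "\<And>t. t \<in> {0..T} \<Longrightarrow> norm (DF (Phi t z)) \<le> L"
    using flow_deriv[OF Fd DFc flow flow0 T, of z] by blast
  have "w0 (Y p) (Y q) = w0 p q" for p q
  proof -
    obtain y1 where y1: "continuous_on {0..T} y1" "y1 0 = p"
        "\<And>t. t\<in>{0<..<T} \<Longrightarrow> (y1 has_vector_derivative DF (Phi t z) (y1 t)) (at t)" "Y p = y1 T"
      using sol[of p] by blast
    obtain y2 where y2: "continuous_on {0..T} y2" "y2 0 = q"
        "\<And>t. t\<in>{0<..<T} \<Longrightarrow> (y2 has_vector_derivative DF (Phi t z) (y2 t)) (at t)" "Y q = y2 T"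
      using sol[of q] by blast
    show ?thesis using symp_pres[where A="\<lambda>t. DF (Phi t z)", OF T _ y1(1) y1(3) y2(1) y2(3)] sym y1 y2 by simp
  qed
  moreover have "Y (F z) = F z" if fx: "Phi T z = z"
  proof -
    obtain y where y: "continuous_on {0..T} y" "y 0 = F z"
        "\<And>t. t\<in>{0<..<T} \<Longrightarrow> (y has_vector_derivative DF (Phi t z) (y t)) (at t)" "Y (F z) = y T"
      using sol[of "F z"] by blast
    define u where "u t = F (Phi t z)" for t
    have contPhi: "continuous_on S (\<lambda>t. Phi t z)" for S
      by (rule continuous_at_imp_continuous_on) (use flow has_vector_derivative_continuous in blast)
    have Fcont: "continuous_on UNIV F"
      by (rule continuous_at_imp_continuous_on) (use Fd has_derivative_continuous in blast)
    have uc: "continuous_on {0..T} u" unfolding u_def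
      by (rule continuous_on_compose2[OF Fcont contPhi]) auto
    have ud: "(u has_vector_derivative DF (Phi t z) (u t)) (at t)" for t
    proof -
      have "((F \<circ> (\<lambda>s. Phi s z)) has_derivative (blinfun_apply (DF (Phi t z)) \<circ> (\<lambda>h. h *\<^sub>R F (Phi t z)))) (at t)"
        by (rule diff_chain_at[OF flow[unfolded has_vector_derivative_def] Fd])
      then show ?thesis unfolding u_def has_vector_derivative_def
        by (simp add: o_def blinfun.scaleR_right)
    qed
    have "(\<lambda>s. y s - u s) T = 0"
    proof (rule lin_ode_unique[OF T L])
      show "continuous_on {0..T} (\<lambda>s. y s - u s)" using y(1) uc by (intro continuous_intros)
      show "y 0 - u 0 = 0" using y(2) flow0 unfolding u_def by simp
      show "((\<lambda>s. y s - u s) has_vector_derivative DF (Phi s z) (y s - u s)) (at s)" if "s \<in> {0<..<T}" for s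
        using y(3)[OF that] ud[of s] by (auto intro!: derivative_eq_intros simp: blinfun.diff_right)
    qed (use T in auto)
    then show ?thesis using y(4) fx unfolding u_def by simp
  qed
  ultimately show ?thesis using Y by blast
qed

lemma flow_props:
  fixes F :: "(real^'n) \<times> (real^'n) \<Rightarrow> (real^'n) \<times> (real^'n)" and DF :: "(real^'n) \<times> (real^'n) \<Rightarrow> ((real^'n) \<times> (real^'n)) \<Rightarrow>\<^sub>L ((real^'n) \<times> (real^'n))"
    and Phi :: "real \<Rightarrow> (real^'n) \<times> (real^'n) \<Rightarrow> (real^'n) \<times> (real^'n)"
  assumes Fd: "\<And>w. (F has_derivative blinfun_apply (DF w)) (at w)"
    and DFc: "continuous_on UNIV DF"
    and sym: "\<And>w p q. w0 (DF w p) q + w0 p (DF w q) = 0"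
    and flow: "\<And>w t. ((\<lambda>s. Phi s w) has_vector_derivative F (Phi t w)) (at t)"
    and flow0: "\<And>w. Phi 0 w = w"
  shows "\<exists>Y. (Phi T has_derivative Y) (at z) \<and> (\<forall>p q. w0 (Y p) (Y q) = w0 p q) \<and>
          (Phi T z = z \<longrightarrow> Y (F z) = F z)"
proof (cases "0 \<le> T")
  case True
  then show ?thesis using flow_props_pos[OF Fd DFc sym flow flow0] by blast
next
  case False
  have Fd': "((\<lambda>w. - F w) has_derivative blinfun_apply (- DF w)) (at w)" for w
    using has_derivative_minus[OF Fd[of w]] by (simp add: uminus_blinfun.rep_eq)
  have DFc': "continuous_on UNIV (\<lambda>w. - DF w)" using DFc by (intro continuous_intros)
  have wm: "w0 (- x) y = - w0 x y" for x y unfolding w0_def by (simp add: Jmat_minus)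
  have sym': "w0 ((- DF w) p) q + w0 p ((- DF w) q) = 0" for w p q
    using sym[of w p q] by (simp add: uminus_blinfun.rep_eq wm w0_def Jmat_minus)
  have flow': "((\<lambda>s. Phi (- s) w) has_vector_derivative - F (Phi (- t) w)) (at t)" for w t
  proof -
    have "(((\<lambda>s. Phi s w) \<circ> uminus) has_vector_derivative (-1) *\<^sub>R F (Phi (- t) w)) (at t)"
      by (rule vector_diff_chain_at[OF _ flow]) (auto intro!: derivative_eq_intros)
    then show ?thesis by (simp add: o_def)
  qed
  have flow0': "Phi (- 0) w = w" for w using flow0 by simp
  have T': "0 \<le> - T" using False by simp
  obtain Y where Y: "((\<lambda>w. Phi (- (- T)) w) has_derivative Y) (at z)" "\<forall>p q. w0 (Y p) (Y q) = w0 p q"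
      "Phi (- (- T)) z = z \<longrightarrow> Y (- F z) = - F z"
    using flow_props_pos[where F="\<lambda>w. - F w" and DF="\<lambda>w. - DF w" and Phi="\<lambda>s w. Phi (- s) w",
        OF Fd' DFc' sym' flow' flow0' T', of z] by blast
  have "Y (- F z) = - Y (F z)" using Y(1) by (simp add: has_derivative_bounded_linear linear_simps(2)
        bounded_linear.linear linear_neg)
  then show ?thesis using Y by (intro exI[of _ Y]) auto
qed

lemma line_deriv:
  fixes f :: "'a::real_normed_vector \<Rightarrow> real"
  assumes "(f has_derivative Df) (at (p + \<tau> *\<^sub>R v))"
  shows "((\<lambda>\<tau>. f (p + \<tau> *\<^sub>R v)) has_derivative (\<lambda>h. h * Df v)) (at \<tau>)"
proof -
  have l: "((\<lambda>\<tau>. p + \<tau> *\<^sub>R v) has_derivative (\<lambda>h. h *\<^sub>R v)) (at \<tau>)"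
    by (auto intro!: derivative_eq_intros)
  have "((f \<circ> (\<lambda>\<tau>. p + \<tau> *\<^sub>R v)) has_derivative (Df \<circ> (\<lambda>h. h *\<^sub>R v))) (at \<tau>)"
    by (rule diff_chain_at[OF l assms])
  moreover have "Df (h *\<^sub>R v) = h * Df v" for h
    using has_derivative_bounded_linear[OF assms] by (simp add: linear_simps(5) bounded_linear.linear linear_scale)
  ultimately show ?thesis by (simp add: o_def)
qed

lemma schwarz_aux:
  fixes f :: "'a::real_normed_vector \<Rightarrow> real"
  assumes f1: "\<And>x. (f has_derivative Df x) (at x)"
    and gb: "\<And>x. ((\<lambda>x. Df x b) has_derivative Db x) (at x)"
    and s: "0 < s"
  shows "\<exists>\<tau> \<sigma>. 0 < \<tau> \<and> \<tau> < s \<and> 0 < \<sigma> \<and> \<sigma> < s \<and>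
     f (x + s *\<^sub>R b + s *\<^sub>R c) - f (x + s *\<^sub>R b) - f (x + s *\<^sub>R c) + f x = s * s * Db (x + \<tau> *\<^sub>R b + \<sigma> *\<^sub>R c) c"
proof -
  have fc: "continuous_on UNIV f"
    by (rule continuous_at_imp_continuous_on) (use f1 has_derivative_continuous in blast)
  define u where "u \<tau> = f ((x + s *\<^sub>R c) + \<tau> *\<^sub>R b) - f (x + \<tau> *\<^sub>R b)" for \<tau>
  have uc: "continuous_on {0..s} u" unfolding u_def
    by (intro continuous_intros continuous_on_compose2[OF fc]) auto
  have ud: "(u has_derivative (\<lambda>h. h * Df ((x + s *\<^sub>R c) + \<tau> *\<^sub>R b) b - h * Df (x + \<tau> *\<^sub>R b) b)) (at \<tau>)" for \<tau>
    unfolding u_def by (intro has_derivative_diff line_deriv f1)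
  obtain \<tau> where \<tau>: "0 < \<tau>" "\<tau> < s" "u s - u 0 = (s - 0) * Df ((x + s *\<^sub>R c) + \<tau> *\<^sub>R b) b - (s - 0) * Df (x + \<tau> *\<^sub>R b) b"
    using mvt[OF s uc ud] by metis
  define v where "v \<sigma> = Df ((x + \<tau> *\<^sub>R b) + \<sigma> *\<^sub>R c) b" for \<sigma>
  have gbc: "continuous_on UNIV (\<lambda>x. Df x b)"
    by (rule continuous_at_imp_continuous_on) (use gb has_derivative_continuous in blast)
  have vc: "continuous_on {0..s} v" unfolding v_def
    by (intro continuous_intros continuous_on_compose2[OF gbc]) auto
  have vd: "(v has_derivative (\<lambda>h. h * Db ((x + \<tau> *\<^sub>R b) + \<sigma> *\<^sub>R c) c)) (at \<sigma>)" for \<sigma>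
    unfolding v_def by (rule line_deriv[where f="\<lambda>x. Df x b"]) (rule gb)
  obtain \<sigma> where \<sigma>: "0 < \<sigma>" "\<sigma> < s" "v s - v 0 = (s - 0) * Db ((x + \<tau> *\<^sub>R b) + \<sigma> *\<^sub>R c) c"
    using mvt[OF s vc vd] by metis
  have "f (x + s *\<^sub>R b + s *\<^sub>R c) - f (x + s *\<^sub>R b) - f (x + s *\<^sub>R c) + f x = u s - u 0"
    unfolding u_def by (simp add: algebra_simps)
  also have "\<dots> = s * (v s - v 0)" using \<tau>(3) unfolding v_def by (simp add: algebra_simps)
  also have "\<dots> = s * s * Db (x + \<tau> *\<^sub>R b + \<sigma> *\<^sub>R c) c" using \<sigma>(3) by simp
  finally show ?thesis using \<tau> \<sigma> by blast
qed

lemma schwarz: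
  fixes f :: "'a::real_normed_vector \<Rightarrow> real"
  assumes f1: "\<And>x. (f has_derivative Df x) (at x)"
    and gb: "\<And>x. ((\<lambda>x. Df x b) has_derivative Db x) (at x)"
    and gc: "\<And>x. ((\<lambda>x. Df x c) has_derivative Dc x) (at x)"
    and cb: "continuous_on UNIV (\<lambda>x. Db x c)"
    and cc: "continuous_on UNIV (\<lambda>x. Dc x b)"
  shows "Db x c = Dc x b"
proof (rule ccontr)
  assume ne: "Db x c \<noteq> Dc x b"
  define e where "e = \<bar>Db x c - Dc x b\<bar> / 2"
  have e: "0 < e" unfolding e_def using ne by simp
  obtain d1 where d1: "0 < d1" "\<And>y. dist y x < d1 \<Longrightarrow> dist (Db y c) (Db x c) < e"
    using cb e unfolding continuous_on_iff by blast
  obtain d2 where d2: "0 < d2" "\<And>y. dist y x < d2 \<Longrightarrow> dist (Dc y b) (Dc x b) < e"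
    using cc e unfolding continuous_on_iff by blast
  define s where "s = min d1 d2 / (2 * (norm b + norm c + 1))"
  have s: "0 < s" unfolding s_def using d1(1) d2(1) using norm_ge_zero[of b] norm_ge_zero[of c] by (intro divide_pos_pos) (auto simp del: norm_ge_zero)
  have small: "dist (x + \<tau> *\<^sub>R b + \<sigma> *\<^sub>R c) x < min d1 d2" if "0 < \<tau>" "\<tau> < s" "0 < \<sigma>" "\<sigma> < s" for \<tau> \<sigma>
  proof -
    have "dist (x + \<tau> *\<^sub>R b + \<sigma> *\<^sub>R c) x = norm (\<tau> *\<^sub>R b + \<sigma> *\<^sub>R c)" by (simp add: dist_norm)
    also have "\<dots> \<le> \<tau> * norm b + \<sigma> * norm c"
      using norm_triangle_ineq[of "\<tau> *\<^sub>R b" "\<sigma> *\<^sub>R c"] that by simp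
    also have "\<dots> \<le> s * norm b + s * norm c" using that by (intro add_mono mult_right_mono) auto
    also have "\<dots> < s * (2 * (norm b + norm c + 1))"
    proof -
      have "0 \<le> s * norm b" "0 \<le> s * norm c" using s by simp_all
      moreover have "s * (2 * (norm b + norm c + 1)) = 2 * (s * norm b) + 2 * (s * norm c) + 2 * s"
        by (simp add: algebra_simps)
      ultimately show ?thesis using s by linarith
    qed
    also have "\<dots> = min d1 d2"
    proof -
      have "0 < 2 * (norm b + norm c + 1)" using norm_ge_zero[of b] norm_ge_zero[of c] by (simp del: norm_ge_zero)
      then show ?thesis unfolding s_def by simp
    qed
    finally show ?thesis .
  qed
  obtain \<tau>1 \<sigma>1 where 1: "0 < \<tau>1" "\<tau>1 < s" "0 < \<sigma>1" "\<sigma>1 < s"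
    "f (x + s *\<^sub>R b + s *\<^sub>R c) - f (x + s *\<^sub>R b) - f (x + s *\<^sub>R c) + f x = s * s * Db (x + \<tau>1 *\<^sub>R b + \<sigma>1 *\<^sub>R c) c"
    using schwarz_aux[OF f1 gb s, of x c] by blast
  obtain \<tau>2 \<sigma>2 where 2: "0 < \<tau>2" "\<tau>2 < s" "0 < \<sigma>2" "\<sigma>2 < s"
    "f (x + s *\<^sub>R c + s *\<^sub>R b) - f (x + s *\<^sub>R c) - f (x + s *\<^sub>R b) + f x = s * s * Dc (x + \<tau>2 *\<^sub>R c + \<sigma>2 *\<^sub>R b) b"
    using schwarz_aux[OF f1 gc s, of x b] by blast
  have "s * s * Db (x + \<tau>1 *\<^sub>R b + \<sigma>1 *\<^sub>R c) c = s * s * Dc (x + \<tau>2 *\<^sub>R c + \<sigma>2 *\<^sub>R b) b"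
    using 1(5) 2(5) by (simp add: algebra_simps)
  then have eq: "Db (x + \<tau>1 *\<^sub>R b + \<sigma>1 *\<^sub>R c) c = Dc (x + \<tau>2 *\<^sub>R c + \<sigma>2 *\<^sub>R b) b" using s by simp
  have a: "\<bar>Db (x + \<tau>1 *\<^sub>R b + \<sigma>1 *\<^sub>R c) c - Db x c\<bar> < e"
    using d1(2)[OF less_le_trans[OF small[OF 1(1-4)]]] by (simp add: dist_real_def)
  have b: "\<bar>Dc (x + \<tau>2 *\<^sub>R c + \<sigma>2 *\<^sub>R b) b - Dc x b\<bar> < e"
  proof -
    have eq2: "x + \<tau>2 *\<^sub>R c + \<sigma>2 *\<^sub>R b = x + \<sigma>2 *\<^sub>R b + \<tau>2 *\<^sub>R c" by (simp add: algebra_simps)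
    show ?thesis unfolding eq2 using d2(2)[OF less_le_trans[OF small[OF 2(3) 2(4) 2(1) 2(2)]]] by (simp add: dist_real_def)
  qed
  have "\<bar>Db x c - Dc x b\<bar> < 2 * e" using a b eq by linarith
  then show False unfolding e_def by simp
qed

lemma sym_hess:
  fixes D :: "'a::euclidean_space \<Rightarrow> 'a \<Rightarrow> real"
  assumes lin: "\<And>b. linear (D b)" and sw: "\<And>b c. b \<in> Basis \<Longrightarrow> c \<in> Basis \<Longrightarrow> D b c = D c b"
  shows "inner (\<Sum>b\<in>Basis. D b p *\<^sub>R b) q = inner p (\<Sum>b\<in>Basis. D b q *\<^sub>R b)"
proof -
  have exp: "D b x = (\<Sum>c\<in>Basis. (x \<bullet> c) * D b c)" for b x
    using Linear_Algebra.linear_componentwise[OF lin[of b], of x 1] by (simp add: inner_real_def)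
  have "inner (\<Sum>b\<in>Basis. D b p *\<^sub>R b) q = (\<Sum>b\<in>Basis. \<Sum>c\<in>Basis. (p \<bullet> c) * D b c * (b \<bullet> q))"
    by (simp add: inner_sum_left exp[of _ p] sum_distrib_right)
  also have "\<dots> = (\<Sum>b\<in>Basis. \<Sum>c\<in>Basis. (p \<bullet> c) * D c b * (b \<bullet> q))"
    by (intro sum.cong refl) (simp add: sw)
  also have "\<dots> = (\<Sum>c\<in>Basis. \<Sum>b\<in>Basis. (p \<bullet> c) * D c b * (b \<bullet> q))"
    by (rule sum.swap)
  also have "\<dots> = inner p (\<Sum>b\<in>Basis. D b q *\<^sub>R b)"
    by (simp add: inner_sum_right exp[of _ q] sum_distrib_left inner_commute mult.commute mult.left_commute)
  finally show ?thesis .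
qed

theorem mainTheorem3:
  fixes H :: "(real^'n) \<times> (real^'n) \<Rightarrow> real"
    and Phi :: "real \<Rightarrow> (real^'n) \<times> (real^'n) \<Rightarrow> (real^'n) \<times> (real^'n)"
    and E T :: real and z :: "(real^'n) \<times> (real^'n)"
  assumes "smooth_fun H"
    and "hamiltonian_flow H Phi"
    and "H z = E"
    and "Phi T z = z"
    and "grad H z \<noteq> 0"
  shows "let M = frechet_derivative (Phi T) (at z);
             N = (\<lambda>x. M x - x);
             E1 = {x. \<exists>k\<ge>1. (N ^^ k) x = 0};
             \<E>1 = {x. M x = x \<and> inner (grad H z) x = 0};
             \<E>2 = {x \<in> \<E>1. \<forall>y\<in>\<E>1. w0 x y = 0}
         in E1 = {x. (N ^^ 2) x = 0} \<longleftrightarrow> dim E1 = dim \<E>1 + dim \<E>2"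
proof -
  have smc: "\<And>vs. continuous_on UNIV (iter_deriv vs H)"
    and smd: "\<And>vs x. iter_deriv vs H differentiable (at x)"
    using assms(1) unfolding smooth_fun_def by auto
  define Df where "Df x = frechet_derivative H (at x)" for x
  have Hd: "(H has_derivative Df x) (at x)" for x
    using smd[of "[]" x] unfolding Df_def by (simp add: frechet_derivative_works)
  have D1: "iter_deriv [b] H = (\<lambda>x. Df x b)" for b by (simp add: Df_def fun_eq_iff)
  define D2 where "D2 b x = frechet_derivative (iter_deriv [b] H) (at x)" for b x
  have gd: "((\<lambda>x. Df x b) has_derivative D2 b x) (at x)" for b x
    using smd[of "[b]" x] unfolding D2_def D1[symmetric] by (simp add: frechet_derivative_works)
  have D2eq: "D2 b x c = iter_deriv [c, b] H x" for b c x by (simp add: D2_def)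
  have D2cont: "continuous_on UNIV (\<lambda>x. D2 b x c)" for b c
    unfolding D2eq using smc[of "[c, b]"] by simp
  have sw: "D2 b x c = D2 c x b" for b c x
    by (rule schwarz[OF Hd gd gd D2cont D2cont])
  have linD2: "linear (D2 b x)" for b x
    using has_derivative_bounded_linear[OF gd[of b x]] bounded_linear.linear by blast
  define S where "S x p = (\<Sum>b\<in>Basis. D2 b x p *\<^sub>R b)" for x p
  have Gd: "(grad H has_derivative S x) (at x)" for x
  proof -
    have g: "grad H = (\<lambda>x. \<Sum>b\<in>Basis. Df x b *\<^sub>R b)" unfolding grad_def Df_def by (simp add: fun_eq_iff)
    show ?thesis unfolding g S_def
      by (intro has_derivative_sum has_derivative_scaleR_left gd)
  qed
  define F where "F x = Jmat (grad H x)" for x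
  define DFf where "DFf x p = Jmat (S x p)" for x p
  have Fd0: "(F has_derivative DFf x) (at x)" for x
    unfolding F_def DFf_def using bounded_linear.has_derivative[OF bounded_linear_Jmat Gd] .
  define DF where "DF x = Blinfun (DFf x)" for x
  have DFa: "blinfun_apply (DF x) = DFf x" for x
    unfolding DF_def using has_derivative_bounded_linear[OF Fd0] by (simp add: bounded_linear_Blinfun_apply)
  have Fd: "(F has_derivative blinfun_apply (DF x)) (at x)" for x using Fd0 DFa by simp
  have DFc: "continuous_on UNIV DF"
  proof (rule continuous_on_blinfun_componentwise)
    fix i :: "(real^'n) \<times> (real^'n)"
    have "continuous_on UNIV (\<lambda>x. S x i)" unfolding S_def
      by (intro continuous_intros D2cont)
    then have "continuous_on UNIV (\<lambda>x. Jmat (S x i))"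
      by (rule continuous_on_compose2[OF linear_continuous_on[OF bounded_linear_Jmat]]) auto
    then show "continuous_on UNIV (\<lambda>x. blinfun_apply (DF x) i)" by (simp add: DFa DFf_def)
  qed
  have sym: "w0 (DF w p) q + w0 p (DF w q) = 0" for w p q
  proof -
    have "inner (S w p) q = inner p (S w q)" unfolding S_def
      by (rule sym_hess[OF linD2 sw])
    then show ?thesis by (simp add: DFa DFf_def w0_def)
  qed
  have flow: "((\<lambda>s. Phi s w) has_vector_derivative F (Phi t w)) (at t)" for w t
    using assms(2) unfolding hamiltonian_flow_def F_def by blast
  have flow0: "Phi 0 w = w" for w
    using assms(2) unfolding hamiltonian_flow_def by blast
  obtain Y where Y: "(Phi T has_derivative Y) (at z)" "\<forall>p q. w0 (Y p) (Y q) = w0 p q"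
      "Phi T z = z \<longrightarrow> Y (F z) = F z"
    using flow_props[OF Fd DFc sym flow flow0, of T z] by blast
  have eq: "frechet_derivative (Phi T) (at z) = Y" using frechet_derivative_at[OF Y(1)] by simp
  have linY: "linear Y" using has_derivative_bounded_linear[OF Y(1)] bounded_linear.linear by blast
  have fx: "Y (Jmat (grad H z)) = Jmat (grad H z)" using Y(3) assms(4) unfolding F_def by simp
  have symY: "\<And>p q. w0 (Y p) (Y q) = w0 p q" using Y(2) by blast
  have lin': "linear (frechet_derivative (Phi T) (at z))" using linY eq by simp
  have symp': "\<And>p q. w0 (frechet_derivative (Phi T) (at z) p) (frechet_derivative (Phi T) (at z) q) = w0 p q"
    using symY eq by simp
  have fx': "frechet_derivative (Phi T) (at z) (Jmat (grad H z)) = Jmat (grad H z)" using fx eq by simp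
  show ?thesis
    by (rule LA_main[where M="frechet_derivative (Phi T) (at z)" and g="grad H z", OF lin' symp' fx'])
qed

end
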